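(* Let $V$ be a finite set of variables and let $(\mathit{base}_0, \mathit{stay}_0, \mathit{step}_0, \mathit{conc}_0)$ and $(\mathit{base}_1, \mathit{stay}_1, \mathit{step}_1, \mathit{conc}_1)$ be generalized acceleration lemmas (GALs) over $V$. Define $$\mathit{stayBase} := \bigwedge_{i \in \{0,1\}}\big((\mathit{base}_i \land \lnot \mathit{base}_{1 - i}) \to \mathit{base}_i[V \mapsto V']\big),$$ $$\mathit{step} := \mathit{stayBase} \land \bigvee_{i \in \{0, 1\}}(\mathit{step}_i \land \lnot\mathit{base}_i \land \mathit{stay}_{1 - i}).$$ Then the tuple $(\mathit{base}_0 \land \mathit{base}_1,\ \mathit{stay}_0 \land \mathit{stay}_1 \land \mathit{stayBase},\ \mathit{step},\ \mathit{conc}_0 \land \mathit{conc}_1)$ is also a GAL over $V$.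
   Context: Fix a first-order theory $T$. For a set of variables $X$, $\mathcal{A}(X)$ denotes the set of assignments $\nu: X \to \mathcal{V}$ (values). $X' = \{x' \mid x \in X\}$ is a disjoint primed copy of $X$; for $\nu \in \mathcal{A}(X)$, $\nu' \in \mathcal{A}(X')$ is given by $\nu'(x') = \nu(x)$; for $\nu_1,\nu_2 \in \mathcal{A}(X)$, $\langle \nu_1,\nu_2\rangle := \nu_1 \uplus \nu_2'$. $\nu \models_T \alpha$ denotes entailment in $T$. For a formula $\alpha$, $\alpha[V\mapsto V']$ is the result of replacing each $v\in V$ simultaneously by $v'$. A generalized acceleration lemma (GAL) over $V$ is a tuple $(\mathit{base}, \mathit{stay}, \mathit{step}, \mathit{conc})$ of first-order formulas with $\mathit{base}, \mathit{conc}$ having free variables in $V$ and $\mathit{stay}, \mathit{step}$ having free variables in $V \cup V'$, such that: (I) for every sequence $\alpha \in \mathcal{A}(V)^\omega$ with $\alpha[0] \models_T \mathit{conc}$, if (a) for all $i$, $\langle\alpha[i],\alpha[i+1]\rangle \models_T \mathit{step} \lor \mathit{stay}$, and (b) for all $i$ there is $j \ge i$ with $\langle\alpha[j],\alpha[j+1]\rangle \models_T \mathit{step}$, then there is $k$ with $\alpha[k] \models_T \mathit{base}$; and (II) for all $\nu,\nu' \in \mathcal{A}(V)$ with $\nu \models_T \mathit{conc}$ and $\langle \nu,\nu'\rangle \models_T \mathit{step}\lor\mathit{stay}$, we have $\nu' \models_T \mathit{conc}$. *)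

theory Defs
  imports Main
begin

text \<open>Semantic rendering: the variable set V is the finite type 'v; values are of type 'a.  A formula with free variables in V is
  identified with its satisfaction predicate on A(V) (i.e. nu |=_T alpha); a formula with
  free variables in V union V' is identified with a predicate on pairs <nu1, nu2>,
  where the unprimed variables are read from nu1 and the primed ones from nu2.\<close>

type_synonym ('v, 'a) assign = "'v \<Rightarrow> 'a"
type_synonym ('v, 'a) sform = "('v, 'a) assign \<Rightarrow> bool"
type_synonym ('v, 'a) tform = "('v, 'a) assign \<Rightarrow> ('v, 'a) assign \<Rightarrow> bool"

definition is_GAL ::
  "('v::finite, 'a) sform \<Rightarrow> ('v, 'a) tform \<Rightarrow> ('v, 'a) tform \<Rightarrow> ('v, 'a) sform \<Rightarrow> bool" where
  "is_GAL base stay step conc \<longleftrightarrow>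
     (\<forall>\<alpha> :: nat \<Rightarrow> ('v, 'a) assign.
        conc (\<alpha> 0) \<longrightarrow>
        (\<forall>i. step (\<alpha> i) (\<alpha> (Suc i)) \<or> stay (\<alpha> i) (\<alpha> (Suc i))) \<longrightarrow>
        (\<forall>i. \<exists>j\<ge>i. step (\<alpha> j) (\<alpha> (Suc j))) \<longrightarrow>
        (\<exists>k. base (\<alpha> k)))
   \<and> (\<forall>\<nu> \<nu>'. conc \<nu> \<longrightarrow> (step \<nu> \<nu>' \<or> stay \<nu> \<nu>') \<longrightarrow> conc \<nu>')"

definition stayBase :: "('v, 'a) sform \<Rightarrow> ('v, 'a) sform \<Rightarrow> ('v, 'a) tform" where
  "stayBase base0 base1 = (\<lambda>\<nu> \<nu>'.
     ((base0 \<nu> \<and> \<not> base1 \<nu>) \<longrightarrow> base0 \<nu>') \<and>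
     ((base1 \<nu> \<and> \<not> base0 \<nu>) \<longrightarrow> base1 \<nu>'))"

definition combined_step ::
  "('v, 'a) sform \<Rightarrow> ('v, 'a) tform \<Rightarrow> ('v, 'a) tform \<Rightarrow>
   ('v, 'a) sform \<Rightarrow> ('v, 'a) tform \<Rightarrow> ('v, 'a) tform \<Rightarrow> ('v, 'a) tform" where
  "combined_step base0 stay0 step0 base1 stay1 step1 = (\<lambda>\<nu> \<nu>'.
     stayBase base0 base1 \<nu> \<nu>' \<and>
     ((step0 \<nu> \<nu>' \<and> \<not> base0 \<nu> \<and> stay1 \<nu> \<nu>') \<or>
      (step1 \<nu> \<nu>' \<and> \<not> base1 \<nu> \<and> stay0 \<nu> \<nu>')))"

end

theory Submission
  imports Defs
begin

lemma persist:
  assumes sb: "\<And>i. stayBase b0 b1 (\<alpha> i) (\<alpha> (Suc i))"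
    and nb: "\<And>m. \<not> (b0 (\<alpha> m) \<and> b1 (\<alpha> m))"
    and k: "b0 (\<alpha> k)"
  shows "b0 (\<alpha> (k + n))"
proof (induction n)
  case 0 then show ?case using k by simp
next
  case (Suc n)
  then show ?case using sb[of "k+n"] nb[of "k+n"] by (auto simp: stayBase_def)
qed

theorem lemma1:
  fixes base0 conc0 base1 conc1 :: "('v::finite, 'a) sform"
    and stay0 step0 stay1 step1 :: "('v, 'a) tform"
  assumes "is_GAL base0 stay0 step0 conc0"
    and "is_GAL base1 stay1 step1 conc1"
  shows "is_GAL (\<lambda>\<nu>. base0 \<nu> \<and> base1 \<nu>)
                (\<lambda>\<nu> \<nu>'. stay0 \<nu> \<nu>' \<and> stay1 \<nu> \<nu>' \<and> stayBase base0 base1 \<nu> \<nu>')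
                (combined_step base0 stay0 step0 base1 stay1 step1)
                (\<lambda>\<nu>. conc0 \<nu> \<and> conc1 \<nu>)"
proof -
  have G0: "\<And>\<alpha>. conc0 (\<alpha> 0) \<Longrightarrow> (\<forall>i. step0 (\<alpha> i) (\<alpha> (Suc i)) \<or> stay0 (\<alpha> i) (\<alpha> (Suc i)))
     \<Longrightarrow> (\<forall>i. \<exists>j\<ge>i. step0 (\<alpha> j) (\<alpha> (Suc j))) \<Longrightarrow> \<exists>k. base0 (\<alpha> k)"
    and P0: "\<And>\<nu> \<nu>'. conc0 \<nu> \<Longrightarrow> step0 \<nu> \<nu>' \<or> stay0 \<nu> \<nu>' \<Longrightarrow> conc0 \<nu>'"
    using assms(1) unfolding is_GAL_def by blast+
  have G1: "\<And>\<alpha>. conc1 (\<alpha> 0) \<Longrightarrow> (\<forall>i. step1 (\<alpha> i) (\<alpha> (Suc i)) \<or> stay1 (\<alpha> i) (\<alpha> (Suc i)))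
     \<Longrightarrow> (\<forall>i. \<exists>j\<ge>i. step1 (\<alpha> j) (\<alpha> (Suc j))) \<Longrightarrow> \<exists>k. base1 (\<alpha> k)"
    and P1: "\<And>\<nu> \<nu>'. conc1 \<nu> \<Longrightarrow> step1 \<nu> \<nu>' \<or> stay1 \<nu> \<nu>' \<Longrightarrow> conc1 \<nu>'"
    using assms(2) unfolding is_GAL_def by blast+
  let ?st = "combined_step base0 stay0 step0 base1 stay1 step1"
  let ?sy = "\<lambda>\<nu> \<nu>'. stay0 \<nu> \<nu>' \<and> stay1 \<nu> \<nu>' \<and> stayBase base0 base1 \<nu> \<nu>'"
  have part1: "\<exists>k. base0 (\<alpha> k) \<and> base1 (\<alpha> k)"
    if c: "conc0 (\<alpha> 0) \<and> conc1 (\<alpha> 0)"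
      and tr: "\<forall>i. ?st (\<alpha> i) (\<alpha> (Suc i)) \<or> ?sy (\<alpha> i) (\<alpha> (Suc i))"
      and inf: "\<forall>i. \<exists>j\<ge>i. ?st (\<alpha> j) (\<alpha> (Suc j))" for \<alpha>
  proof (rule ccontr)
    assume nb: "\<not> (\<exists>k. base0 (\<alpha> k) \<and> base1 (\<alpha> k))"
    have sb: "\<And>i. stayBase base0 base1 (\<alpha> i) (\<alpha> (Suc i))"
      using tr by (auto simp: combined_step_def)
    have t0: "\<And>i. step0 (\<alpha> i) (\<alpha> (Suc i)) \<or> stay0 (\<alpha> i) (\<alpha> (Suc i))"
      using tr by (auto simp: combined_step_def)
    have t1: "\<And>i. step1 (\<alpha> i) (\<alpha> (Suc i)) \<or> stay1 (\<alpha> i) (\<alpha> (Suc i))"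
      using tr by (auto simp: combined_step_def)
    define A where "A = (\<lambda>j. step0 (\<alpha> j) (\<alpha> (Suc j)) \<and> \<not> base0 (\<alpha> j))"
    define B where "B = (\<lambda>j. step1 (\<alpha> j) (\<alpha> (Suc j)) \<and> \<not> base1 (\<alpha> j))"
    have AB: "\<And>j. ?st (\<alpha> j) (\<alpha> (Suc j)) \<Longrightarrow> A j \<or> B j"
      by (auto simp: combined_step_def A_def B_def)
    have notA: "\<not> (\<forall>i. \<exists>j\<ge>i. A j)"
    proof
      assume iA: "\<forall>i. \<exists>j\<ge>i. A j"
      then have "\<forall>i. \<exists>j\<ge>i. step0 (\<alpha> j) (\<alpha> (Suc j))" unfolding A_def by blast
      then obtain k where k: "base0 (\<alpha> k)" using G0[of \<alpha>] c t0 by blast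
      obtain j where j: "j \<ge> k" "A j" using iA by blast
      have "base0 (\<alpha> (k + (j - k)))"
        using persist[of base0 base1 \<alpha> k "j - k"] sb nb k by blast
      then show False using j by (simp add: A_def)
    qed
    have notB: "\<not> (\<forall>i. \<exists>j\<ge>i. B j)"
    proof
      assume iB: "\<forall>i. \<exists>j\<ge>i. B j"
      then have "\<forall>i. \<exists>j\<ge>i. step1 (\<alpha> j) (\<alpha> (Suc j))" unfolding B_def by blast
      then obtain k where k: "base1 (\<alpha> k)" using G1[of \<alpha>] c t1 by blast
      have sb': "\<And>i. stayBase base1 base0 (\<alpha> i) (\<alpha> (Suc i))"
        using sb by (auto simp: stayBase_def)
      obtain j where j: "j \<ge> k" "B j" using iB by blast
      have "base1 (\<alpha> (k + (j - k)))"
        using persist[of base1 base0 \<alpha> k "j - k"] sb' nb k by blast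
      then show False using j by (simp add: B_def)
    qed
    from notA obtain a where a: "\<And>j. j \<ge> a \<Longrightarrow> \<not> A j" by (metis not_le_imp_less less_imp_le)
    from notB obtain b where b: "\<And>j. j \<ge> b \<Longrightarrow> \<not> B j" by (metis not_le_imp_less less_imp_le)
    obtain j where "j \<ge> max a b" "?st (\<alpha> j) (\<alpha> (Suc j))" using inf by blast
    then show False using AB a b by fastforce
  qed
  have part2: "conc0 \<nu>' \<and> conc1 \<nu>'"
    if "conc0 \<nu> \<and> conc1 \<nu>" "?st \<nu> \<nu>' \<or> ?sy \<nu> \<nu>'" for \<nu> \<nu>'
    using that P0[of \<nu> \<nu>'] P1[of \<nu> \<nu>'] by (auto simp: combined_step_def)
  show ?thesis unfolding is_GAL_def using part1 part2 by blast
qed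

end
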